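(* The map $\mu:\mathbb{P}(n)\times\mathbb{P}(n)\to\mathbb{P}(n)$, $\mu(A,B)=A*B$, satisfies: (1) $A*B$ is a $d_\infty$-midpoint of $A$ and $B$, i.e. $d_\infty(A,A*B)=d_\infty(A*B,B)=\tfrac12 d_\infty(A,B)$; (2) $\mu$ is continuous; (3) $\mu(A,B)=\mu(B,A)$ for all $A,B\in\mathbb{P}(n)$; (4) $\mu(XAX^*,XBX^* )=X\mu(A,B)X^*$ for all $A,B\in\mathbb{P}(n)$ and all invertible $n\times n$ complex matrices $X$; (5) $(aA)*(bB)=\sqrt{ab}\,(A*B)$ for all real $a,b>0$ and $A,B\in\mathbb{P}(n)$; (6) if $A\preceq B$ then $A\preceq\mu(A,B)\preceq B$; (7) if $\Sigma_1\preceq\Sigma_2$ in $\mathbb{P}(n)$, then $\lambda_{\max}(\mu(I,\Sigma_1))\le\lambda_{\max}(\mu(I,\Sigma_2))$ and $\lambda_{\min}(\mu(I,\Sigma_1))\le\lambda_{\min}(\mu(I,\Sigma_2))$.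
   Context: $\mathbb{P}(n)$ denotes the cone of $n\times n$ positive definite Hermitian matrices; $X^*$ is the conjugate transpose; $\preceq$ is the Löwner order ($A\preceq B$ iff $B-A$ is positive semidefinite). The Thompson metric is $d_{\infty}(A,B)=\|\log A^{-1/2}BA^{-1/2}\|_{\infty}=\max\{\log\lambda_{\max}(BA^{-1}),\log\lambda_{\max}(AB^{-1})\}$. For $A,B\in\mathbb{P}(n)$, with $\lambda_{\max},\lambda_{\min}$ the largest and smallest eigenvalues of $BA^{-1}$, define $A*B=\frac{1}{\sqrt{\lambda_{\min}}+\sqrt{\lambda_{\max}}}\left(B+\sqrt{\lambda_{\min}\lambda_{\max}}\,A\right)$. *)

theory Defs
  imports "HOL-Analysis.Analysis"
begin

definition cadj :: "complex^'n^'m \<Rightarrow> complex^'m^'n" where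
  "cadj A = (\<chi> i j. cnj (A $ j $ i))"

definition hermitian :: "complex^'n^'n \<Rightarrow> bool" where
  "hermitian A \<longleftrightarrow> cadj A = A"

definition qform :: "complex^'n^'n \<Rightarrow> complex^'n \<Rightarrow> complex" where
  "qform A x = (\<Sum>i\<in>UNIV. cnj (x $ i) * ((A *v x) $ i))"

definition posdef :: "complex^'n^'n \<Rightarrow> bool" where
  "posdef A \<longleftrightarrow> hermitian A \<and> (\<forall>x. x \<noteq> 0 \<longrightarrow> Re (qform A x) > 0)"

definition possemidef :: "complex^'n^'n \<Rightarrow> bool" where
  "possemidef A \<longleftrightarrow> hermitian A \<and> (\<forall>x. Re (qform A x) \<ge> 0)"

definition PD :: "(complex^'n^'n) set" where
  "PD = {A. posdef A}"

definition loewner_le :: "complex^'n^'n \<Rightarrow> complex^'n^'n \<Rightarrow> bool" where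
  "loewner_le A B \<longleftrightarrow> possemidef (B - A)"

text \<open>Real eigenvalues of a complex matrix (for the matrices considered here,
  all eigenvalues are real and positive).\<close>
definition real_eigenvalues :: "complex^'n^'n \<Rightarrow> real set" where
  "real_eigenvalues M = {r. \<exists>v. v \<noteq> 0 \<and> M *v v = complex_of_real r *s v}"

definition lam_max :: "complex^'n^'n \<Rightarrow> real" where
  "lam_max M = Max (real_eigenvalues M)"

definition lam_min :: "complex^'n^'n \<Rightarrow> real" where
  "lam_min M = Min (real_eigenvalues M)"

definition thompson :: "complex^'n^'n \<Rightarrow> complex^'n^'n \<Rightarrow> real" where
  "thompson A B = max (ln (lam_max (B ** matrix_inv A))) (ln (lam_max (A ** matrix_inv B)))"

definition mu :: "complex^'n^'n \<Rightarrow> complex^'n^'n \<Rightarrow> complex^'n^'n" where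
  "mu A B = (let lmax = lam_max (B ** matrix_inv A); lmin = lam_min (B ** matrix_inv A)
             in (1 / (sqrt lmin + sqrt lmax)) *\<^sub>R (B + sqrt (lmin * lmax) *\<^sub>R A))"

end

theory Submission
  imports Defs
begin


definition qf :: "complex^'n^'n \<Rightarrow> complex^'n \<Rightarrow> real" where
  "qf A x = Re (qform A x)"

lemma vsR: "((c::real) *\<^sub>R (v::complex^'n))$i = of_real c * v$i"
  by (simp only: vector_scaleR_component) (simp add: scaleR_conv_of_real)

lemma msR: "((c::real) *\<^sub>R (A::complex^'n^'m))$i$j = of_real c * A$i$j"
  by (simp only: vector_scaleR_component) (simp add: scaleR_conv_of_real)

lemma mvm_scaleR: "((c::real) *\<^sub>R (A::complex^'n^'m)) *v x = c *\<^sub>R (A *v x)"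
  by (simp only: vec_eq_iff vsR msR matrix_vector_mult_def vec_lambda_beta sum_distrib_left mult.assoc) simp

lemma mvm_vscaleR: "(A::complex^'n^'m) *v ((c::real) *\<^sub>R x) = c *\<^sub>R (A *v x)"
  by (simp only: vec_eq_iff vsR matrix_vector_mult_def vec_lambda_beta sum_distrib_left mult.left_commute) simp

lemma qform_add: "qform (A + B) x = qform A x + qform B x"
  by (simp add: qform_def matrix_vector_mult_add_rdistrib sum.distrib algebra_simps)

lemma qform_diff: "qform (A - B) x = qform A x - qform B x"
  by (simp add: qform_def matrix_vector_mult_diff_rdistrib sum_subtractf algebra_simps)

lemma qform_scaleR: "qform ((c::real) *\<^sub>R A) x = of_real c * qform A x"
  by (simp only: qform_def mvm_scaleR vsR sum_distrib_left mult.left_commute)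

lemma qform_vscaleR: "qform A ((c::real) *\<^sub>R x) = of_real (c^2) * qform A x"
  by (simp only: qform_def mvm_vscaleR vsR sum_distrib_left mult.left_commute mult.assoc complex_cnj_complex_of_real of_real_power power2_eq_square)
     (simp add: algebra_simps)

lemma qform_zero[simp]: "qform A 0 = 0"
  by (simp add: qform_def)

lemma hermitian_entry: "hermitian A \<Longrightarrow> A$i$j = cnj (A$j$i)"
  unfolding hermitian_def cadj_def by (metis vec_lambda_beta)

lemma herm_swap:
  assumes "hermitian A"
  shows "(\<Sum>i\<in>UNIV. cnj (x$i) * (A *v y)$i) = (\<Sum>i\<in>UNIV. cnj ((A *v x)$i) * y$i)"
proof -
  have h: "cnj (A$j$i) = A$i$j" for i j using hermitian_entry[OF assms, of i j] by simp
  have "(\<Sum>i\<in>UNIV. cnj (x$i) * (A *v y)$i) = (\<Sum>i\<in>UNIV. \<Sum>j\<in>UNIV. cnj (x$i) * A$i$j * y$j)"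
    by (simp add: matrix_vector_mult_def sum_distrib_left mult.assoc)
  also have "\<dots> = (\<Sum>j\<in>UNIV. \<Sum>i\<in>UNIV. cnj (x$i) * A$i$j * y$j)"
    by (rule sum.swap)
  also have "\<dots> = (\<Sum>j\<in>UNIV. \<Sum>i\<in>UNIV. cnj (A$j$i) * cnj (x$i) * y$j)"
    by (intro sum.cong refl) (simp add: h)
  also have "\<dots> = (\<Sum>i\<in>UNIV. cnj ((A *v x)$i) * y$i)"
    by (simp add: matrix_vector_mult_def sum_distrib_right)
  finally show ?thesis .
qed

lemma PD_herm: "A \<in> PD \<Longrightarrow> hermitian A"
  by (simp add: PD_def posdef_def)

lemma PD_pos: "A \<in> PD \<Longrightarrow> x \<noteq> 0 \<Longrightarrow> qf A x > 0"
  by (simp add: PD_def posdef_def qf_def)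

lemma PD_nonneg: "A \<in> PD \<Longrightarrow> qf A x \<ge> 0"
  by (cases "x = 0") (auto simp: qf_def dest: PD_pos[of A x])

lemma PD_inj: "A \<in> PD \<Longrightarrow> A *v x = 0 \<Longrightarrow> x = 0"
  using PD_pos[of A x] by (auto simp: qf_def qform_def)

lemma PD_invertible: "(A::complex^'n^'n) \<in> PD \<Longrightarrow> invertible A"
  unfolding invertible_left_inverse matrix_left_invertible_ker using PD_inj by blast

lemma minv: "invertible (A::complex^'n^'n) \<Longrightarrow> A ** matrix_inv A = mat 1 \<and> matrix_inv A ** A = mat 1"
  unfolding matrix_inv_def invertible_def by (rule someI_ex)

lemma qform_eig: "B *v x = c *\<^sub>R (A *v x) \<Longrightarrow> qform B x = of_real c * qform A x"
  by (simp only: qform_def vsR sum_distrib_left mult.left_commute)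

lemma qform_plus: "qform C (x + y) = qform C x + (\<Sum>i\<in>UNIV. cnj (x$i) * (C *v y)$i)
   + (\<Sum>i\<in>UNIV. cnj (y$i) * (C *v x)$i) + qform C y"
  by (simp add: qform_def matrix_vector_right_distrib sum.distrib algebra_simps)

lemma cnj_mult_self: "Re (cnj z * z) = (cmod z)^2"
  by (metis Re_complex_of_real complex_norm_square mult.commute)

lemma nsd_zero:
  assumes h: "hermitian C" and nsd: "\<And>y. qf C y \<le> 0" and x: "qf C x = 0"
  shows "C *v x = 0"
proof -
  define w where "w = C *v x"
  define S where "S = (\<Sum>i\<in>UNIV. cnj (w$i) * w$i)"
  define Q where "Q = qf C w"
  have ReS: "Re S = (\<Sum>i\<in>UNIV. (cmod (w$i))^2)"
    by (simp only: S_def Re_sum cnj_mult_self)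
  have S0: "Re S \<ge> 0" unfolding ReS by (simp add: sum_nonneg)
  have e: "qform C (x + t *\<^sub>R w) = qform C x + of_real (2*t) * S + of_real (t^2) * qform C w" for t :: real
  proof -
    have a: "(\<Sum>i\<in>UNIV. cnj (x$i) * (C *v (t *\<^sub>R w))$i) = of_real t * S"
      unfolding herm_swap[OF h] by (simp only: vsR S_def w_def sum_distrib_left mult.left_commute mult.commute)
    have b: "(\<Sum>i\<in>UNIV. cnj ((t *\<^sub>R w)$i) * (C *v x)$i) = of_real t * S"
      by (simp only: vsR S_def w_def sum_distrib_left mult.left_commute complex_cnj_mult complex_cnj_complex_of_real mult.assoc)
    show ?thesis unfolding qform_plus a b qform_vscaleR by (simp add: algebra_simps)
  qed
  have "Re S = 0"
  proof (rule ccontr)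
    assume "Re S \<noteq> 0"
    with S0 have Sp: "Re S > 0" by simp
    have Q0: "Q \<le> 0" using nsd by (simp add: Q_def)
    define t where "t = Re S / (1 - Q)"
    have tp: "t > 0" using Sp Q0 by (simp add: t_def)
    have "t * (1 - Q) = Re S" using Q0 by (simp add: t_def)
    have "qf C (x + t *\<^sub>R w) = 2*t*Re S + t^2 * Q"
      using x unfolding qf_def e Q_def by simp
    also have "\<dots> \<ge> t * Re S"
    proof -
      have "t^2 * Q \<ge> - (t * (t * (1 - Q)))" using tp Q0 by (simp add: power2_eq_square algebra_simps mult_nonneg_nonneg)
      then show ?thesis using \<open>t * (1 - Q) = Re S\<close> by simp
    qed
    finally have "qf C (x + t *\<^sub>R w) > 0" using tp Sp by (meson less_le_trans mult_pos_pos)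
    with nsd show False by (meson not_le)
  qed
  then have "\<forall>i\<in>UNIV. (cmod (w$i))^2 = 0"
    unfolding ReS by (subst sum_nonneg_eq_0_iff[symmetric]) auto
  then have "w = 0" by (simp add: vec_eq_iff)
  then show ?thesis by (simp add: w_def)
qed

lemma cont_qf: "continuous_on UNIV (qf M)"
  unfolding qf_def[abs_def] qform_def matrix_vector_mult_def
  by (simp add: vec_lambda_beta) (intro continuous_intros)

lemma qf_vscaleR: "qf A (c *\<^sub>R x) = c^2 * qf A x"
  by (simp add: qf_def qform_vscaleR)

lemma qf_zero[simp]: "qf A 0 = 0" by (simp add: qf_def)

lemma sphere_ne: "sphere (0::complex^'n) 1 \<noteq> {}"
  by simp

lemma from_sphere:
  assumes "\<And>u::complex^'n. norm u = 1 \<Longrightarrow> P (qf B u) (qf A u)"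
    and "\<And>a b r. P a b \<Longrightarrow> r \<ge> 0 \<Longrightarrow> P (r * a) (r * b)" and "P 0 0"
  shows "P (qf B x) (qf A x)"
proof (cases "x = 0")
  case True then show ?thesis using assms(3) by simp
next
  case False
  define u where "u = (1 / norm x) *\<^sub>R x"
  have nu: "norm u = 1" using False by (simp add: u_def)
  have xu: "x = norm x *\<^sub>R u" using False by (simp add: u_def)
  have "P ((norm x)^2 * qf B u) ((norm x)^2 * qf A u)" using assms(1)[OF nu] assms(2) by simp
  then show ?thesis using xu qf_vscaleR by metis
qed

lemma ratio_max:
  fixes A B :: "complex^'n^'n"
  assumes A: "A \<in> PD" and B: "B \<in> PD"
  shows "\<exists>x0 c. x0 \<noteq> 0 \<and> qf B x0 = c * qf A x0 \<and> (\<forall>x. qf B x \<le> c * qf A x)"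
proof -
  let ?S = "sphere (0::complex^'n) 1"
  have nzS: "\<forall>x\<in>?S. qf A x \<noteq> 0"
  proof
    fix x assume "x \<in> ?S" then have "x \<noteq> 0" by auto
    then show "qf A x \<noteq> 0" using PD_pos[OF A] by (metis less_irrefl)
  qed
  have cont: "continuous_on ?S (\<lambda>x. qf B x / qf A x)"
    by (intro continuous_on_divide continuous_on_subset[OF cont_qf] nzS) auto
  obtain x0 where x0: "x0 \<in> ?S" and mx: "\<And>y. y \<in> ?S \<Longrightarrow> qf B y / qf A y \<le> qf B x0 / qf A x0"
    using continuous_attains_sup[OF compact_sphere sphere_ne cont] by blast
  define c where "c = qf B x0 / qf A x0"
  have nz: "x0 \<noteq> 0" using x0 by auto
  have pa: "qf A x0 > 0" using PD_pos[OF A nz] .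
  have "qf B x \<le> c * qf A x" for x
  proof (rule from_sphere[where P = "\<lambda>b a. b \<le> c * a"])
    fix u :: "complex^'n" assume "norm u = 1"
    then have "u \<noteq> 0" by auto
    then have "qf B u / qf A u \<le> c" "qf A u > 0" using mx[of u] PD_pos[OF A, of u] \<open>norm u = 1\<close> by (auto simp: c_def)
    then show "qf B u \<le> c * qf A u" by (simp add: pos_divide_le_eq)
  next
    fix a b r :: real assume "a \<le> c * b" "r \<ge> 0"
    then show "r * a \<le> c * (r * b)" by (metis mult.left_commute mult_left_mono)
  qed simp
  moreover have "qf B x0 = c * qf A x0" using pa by (simp add: c_def)
  ultimately show ?thesis using nz by blast
qed

lemma ratio_min:
  fixes A B :: "complex^'n^'n"
  assumes A: "A \<in> PD" and B: "B \<in> PD"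
  shows "\<exists>x0 c. x0 \<noteq> 0 \<and> qf B x0 = c * qf A x0 \<and> (\<forall>x. qf B x \<ge> c * qf A x)"
proof -
  let ?S = "sphere (0::complex^'n) 1"
  have nzS: "\<forall>x\<in>?S. qf A x \<noteq> 0"
  proof
    fix x assume "x \<in> ?S" then have "x \<noteq> 0" by auto
    then show "qf A x \<noteq> 0" using PD_pos[OF A] by (metis less_irrefl)
  qed
  have cont: "continuous_on ?S (\<lambda>x. qf B x / qf A x)"
    by (intro continuous_on_divide continuous_on_subset[OF cont_qf] nzS) auto
  obtain x0 where x0: "x0 \<in> ?S" and mx: "\<And>y. y \<in> ?S \<Longrightarrow> qf B y / qf A y \<ge> qf B x0 / qf A x0"
    using continuous_attains_inf[OF compact_sphere sphere_ne cont] by blast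
  define c where "c = qf B x0 / qf A x0"
  have nz: "x0 \<noteq> 0" using x0 by auto
  have pa: "qf A x0 > 0" using PD_pos[OF A nz] .
  have "qf B x \<ge> c * qf A x" for x
  proof (rule from_sphere[where P = "\<lambda>b a. b \<ge> c * a"])
    fix u :: "complex^'n" assume "norm u = 1"
    then have "u \<noteq> 0" by auto
    then have "qf B u / qf A u \<ge> c" "qf A u > 0" using mx[of u] PD_pos[OF A, of u] \<open>norm u = 1\<close> by (auto simp: c_def)
    then show "qf B u \<ge> c * qf A u" by (simp add: pos_le_divide_eq)
  next
    fix a b r :: real assume "a \<ge> c * b" "r \<ge> 0"
    then show "r * a \<ge> c * (r * b)" by (metis mult.left_commute mult_left_mono)
  qed simp
  moreover have "qf B x0 = c * qf A x0" using pa by (simp add: c_def)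
  ultimately show ?thesis using nz by blast
qed

lemma cadj_diff: "cadj (A - B) = cadj A - cadj B"
  by (simp add: cadj_def vec_eq_iff)
lemma cadj_add: "cadj (A + B) = cadj A + cadj B"
  by (simp add: cadj_def vec_eq_iff)
lemma cadj_scaleR: "cadj ((c::real) *\<^sub>R A) = c *\<^sub>R cadj A"
  by (simp add: cadj_def vec_eq_iff msR)

lemma herm_diff: "hermitian A \<Longrightarrow> hermitian B \<Longrightarrow> hermitian (A - B)"
  by (simp add: hermitian_def cadj_diff)
lemma herm_add: "hermitian A \<Longrightarrow> hermitian B \<Longrightarrow> hermitian (A + B)"
  by (simp add: hermitian_def cadj_add)
lemma herm_scaleR: "hermitian A \<Longrightarrow> hermitian ((c::real) *\<^sub>R A)"
  by (simp add: hermitian_def cadj_scaleR)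

lemma qf_add: "qf (A + B) x = qf A x + qf B x"
  by (simp add: qf_def qform_add)
lemma qf_diff: "qf (A - B) x = qf A x - qf B x"
  by (simp add: qf_def qform_diff)
lemma qf_scaleR: "qf ((c::real) *\<^sub>R A) x = c * qf A x"
  by (simp add: qf_def qform_scaleR)

lemma sR_smult: "(c::real) *\<^sub>R (v::complex^'n) = complex_of_real c *s v"
  unfolding vec_eq_iff vsR vector_smult_component by simp

lemma eig_in:
  fixes A B :: "complex^'n^'n"
  assumes A: "A \<in> PD" and x: "x \<noteq> 0" and e: "B *v x = c *\<^sub>R (A *v x)"
  shows "c \<in> real_eigenvalues (B ** matrix_inv A)"
proof -
  have inv: "matrix_inv A ** A = mat 1" using minv[OF PD_invertible[OF A]] by blast
  have "A *v x \<noteq> 0" using PD_inj[OF A] x by blast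
  moreover have "(B ** matrix_inv A) *v (A *v x) = complex_of_real c *s (A *v x)"
  proof -
    have "(B ** matrix_inv A) *v (A *v x) = B *v (matrix_inv A *v (A *v x))"
      by (simp add: matrix_vector_mul_assoc matrix_mul_assoc)
    also have "\<dots> = B *v x" by (simp add: matrix_vector_mul_assoc inv)
    also have "\<dots> = complex_of_real c *s (A *v x)" by (simp add: e sR_smult)
    finally show ?thesis .
  qed
  ultimately show ?thesis unfolding real_eigenvalues_def by blast
qed

lemma eig_from:
  fixes A B :: "complex^'n^'n"
  assumes A: "A \<in> PD" and r: "r \<in> real_eigenvalues (B ** matrix_inv A)"
  shows "\<exists>x. x \<noteq> 0 \<and> B *v x = r *\<^sub>R (A *v x)"
proof -
  obtain v where v: "v \<noteq> 0" "(B ** matrix_inv A) *v v = complex_of_real r *s v"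
    using r unfolding real_eigenvalues_def by blast
  have inv: "A ** matrix_inv A = mat 1" using minv[OF PD_invertible[OF A]] by blast
  define x where "x = matrix_inv A *v v"
  have Ax: "A *v x = v" by (simp add: x_def matrix_vector_mul_assoc inv)
  have "x \<noteq> 0" using Ax v(1) by auto
  moreover have "B *v x = r *\<^sub>R (A *v x)"
  proof -
    have "B *v x = (B ** matrix_inv A) *v v" by (simp add: x_def matrix_vector_mul_assoc)
    also have "\<dots> = r *\<^sub>R (A *v x)" by (simp add: v(2) Ax sR_smult)
    finally show ?thesis .
  qed
  ultimately show ?thesis by blast
qed

lemma eig_ratio: "B *v x = r *\<^sub>R (A *v x) \<Longrightarrow> qf B x = r * qf A x"
  by (simp add: qf_def qform_eig)

lemma extreme_eig:
  fixes A B :: "complex^'n^'n"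
  assumes A: "A \<in> PD" and B: "B \<in> PD" and x0: "qf B x0 = c * qf A x0"
    and le: "(\<forall>x. qf B x \<le> c * qf A x) \<or> (\<forall>x. qf B x \<ge> c * qf A x)"
  shows "B *v x0 = c *\<^sub>R (A *v x0)"
proof -
  have hA: "hermitian A" and hB: "hermitian B" using A B by (auto simp: PD_herm)
  from le show ?thesis
  proof
    assume le: "\<forall>x. qf B x \<le> c * qf A x"
    have "(B - c *\<^sub>R A) *v x0 = 0"
      by (rule nsd_zero) (use hA hB le x0 in \<open>auto simp: herm_diff herm_scaleR qf_diff qf_scaleR\<close>)
    then show ?thesis by (simp add: matrix_vector_mult_diff_rdistrib mvm_scaleR)
  next
    assume le: "\<forall>x. qf B x \<ge> c * qf A x"
    have "(c *\<^sub>R A - B) *v x0 = 0"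
      by (rule nsd_zero) (use hA hB le x0 in \<open>auto simp: herm_diff herm_scaleR qf_diff qf_scaleR\<close>)
    then show ?thesis by (simp add: matrix_vector_mult_diff_rdistrib mvm_scaleR)
  qed
qed

definition bil :: "complex^'n^'n \<Rightarrow> complex^'n \<Rightarrow> complex^'n \<Rightarrow> complex" where
  "bil A x y = (\<Sum>i\<in>UNIV. cnj (x$i) * (A *v y)$i)"

lemma bil_eig:
  assumes "B *v y = r *\<^sub>R (A *v y)"
  shows "bil B x y = of_real r * bil A x y"
  using assms by (simp only: bil_def vsR sum_distrib_left mult.left_commute)

lemma eig_orth:
  fixes A B :: "complex^'n^'n"
  assumes A: "A \<in> PD" and B: "B \<in> PD"
    and e1: "B *v x = r1 *\<^sub>R (A *v x)" and e2: "B *v y = r2 *\<^sub>R (A *v y)" and ne: "r1 \<noteq> r2"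
  shows "bil A x y = 0"
proof -
  have hA: "hermitian A" and hB: "hermitian B" using A B by (auto simp: PD_herm)
  have "bil B x y = of_real r2 * bil A x y" by (rule bil_eig[OF e2])
  moreover have "bil B x y = of_real r1 * bil A x y"
  proof -
    have "bil B x y = (\<Sum>i\<in>UNIV. cnj ((B *v x)$i) * y$i)" unfolding bil_def by (rule herm_swap[OF hB])
    also have "\<dots> = of_real r1 * (\<Sum>i\<in>UNIV. cnj ((A *v x)$i) * y$i)"
      by (simp only: e1 vsR complex_cnj_mult complex_cnj_complex_of_real sum_distrib_left mult.assoc)
    also have "\<dots> = of_real r1 * bil A x y" unfolding bil_def herm_swap[OF hA] ..
    finally show ?thesis .
  qed
  ultimately have "(of_real r1 - of_real r2) * bil A x y = 0" by (simp add: algebra_simps)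
  then show ?thesis using ne by simp
qed

lemma eig_finite:
  fixes A B :: "complex^'n^'n"
  assumes A: "A \<in> PD" and B: "B \<in> PD"
  shows "finite (real_eigenvalues (B ** matrix_inv A))"
proof -
  let ?E = "real_eigenvalues (B ** matrix_inv A)"
  have hA: "hermitian A" using A by (simp add: PD_herm)
  define v where "v r = (SOME x. x \<noteq> 0 \<and> B *v x = r *\<^sub>R (A *v x))" for r
  have vE: "v r \<noteq> 0 \<and> B *v v r = r *\<^sub>R (A *v v r)" if "r \<in> ?E" for r
    unfolding v_def by (rule someI_ex) (rule eig_from[OF A that])
  have inj: "inj_on v ?E"
  proof (rule inj_onI)
    fix r1 r2 assume r: "r1 \<in> ?E" "r2 \<in> ?E" and eq: "v r1 = v r2"
    have "qf B (v r1) = r1 * qf A (v r1)" using vE[OF r(1)] eig_ratio by blast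
    moreover have "qf B (v r1) = r2 * qf A (v r1)" using vE[OF r(2)] eig_ratio eq by metis
    moreover have "qf A (v r1) > 0" using vE[OF r(1)] PD_pos[OF A] by blast
    ultimately show "r1 = r2" by simp
  qed
  have ind: "independent (v ` ?E)"
    unfolding real_vector.independent_explicit_module
  proof (intro allI impI)
    fix t u w assume t: "finite t" "t \<subseteq> v ` ?E" and s0: "(\<Sum>w\<in>t. u w *\<^sub>R w) = 0" and w: "w \<in> t"
    obtain r0 where r0: "r0 \<in> ?E" "w = v r0" using t w by blast
    define g where "g y = (\<Sum>i\<in>UNIV. cnj ((A *v w)$i) * y$i)" for y :: "complex^'n"
    have gbil: "g y = bil A w y" for y unfolding g_def bil_def herm_swap[OF hA] ..
    have g0: "g w' = 0" if wt: "w' \<in> t" and wne: "w' \<noteq> w" for w'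
    proof -
      obtain r' where r': "r' \<in> ?E" "w' = v r'" using t wt by blast
      have "r' \<noteq> r0" using r' r0 wne by blast
      then show ?thesis unfolding gbil using eig_orth[OF A B, of w r0 w' r'] vE r0 r' by metis
    qed
    have gw: "Re (g w) > 0"
      using PD_pos[OF A, of w] vE[OF r0(1)] r0(2) by (simp add: gbil bil_def qf_def qform_def)
    have lin: "g (\<Sum>w'\<in>t. u w' *\<^sub>R w') = (\<Sum>w'\<in>t. of_real (u w') * g w')"
      unfolding g_def sum_component vsR by (simp add: sum_distrib_left sum.swap[of _ t] mult.left_commute)
    also have "\<dots> = of_real (u w) * g w"
      using t(1) w g0 by (subst sum.remove[OF t(1) w]) (auto intro!: sum.neutral)
    finally have "of_real (u w) * g w = 0" using s0 by (simp add: g_def)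
    then show "u w = 0" using gw by auto
  qed
  have "finite (v ` ?E)" using independent_bound[OF ind] by blast
  then show ?thesis using finite_imageD inj by blast
qed

lemma lam_max_prop:
  fixes A B :: "complex^'n^'n"
  assumes A: "A \<in> PD" and B: "B \<in> PD"
  shows "(\<forall>x. qf B x \<le> lam_max (B ** matrix_inv A) * qf A x) \<and>
         (\<exists>x0. x0 \<noteq> 0 \<and> qf B x0 = lam_max (B ** matrix_inv A) * qf A x0)"
proof -
  obtain x0 c where x0: "x0 \<noteq> 0" "qf B x0 = c * qf A x0" and le: "\<forall>x. qf B x \<le> c * qf A x"
    using ratio_max[OF A B] by blast
  have "B *v x0 = c *\<^sub>R (A *v x0)" using extreme_eig[OF A B x0(2)] le by blast
  then have cE: "c \<in> real_eigenvalues (B ** matrix_inv A)" using eig_in[OF A x0(1)] by blast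
  have ub: "r \<le> c" if rE: "r \<in> real_eigenvalues (B ** matrix_inv A)" for r
  proof -
    obtain x where x: "x \<noteq> 0" "B *v x = r *\<^sub>R (A *v x)" using eig_from[OF A rE] by blast
    have "r * qf A x \<le> c * qf A x" using eig_ratio[OF x(2)] le by metis
    moreover have "qf A x > 0" using PD_pos[OF A x(1)] .
    ultimately show ?thesis by simp
  qed
  have "lam_max (B ** matrix_inv A) = c"
    unfolding lam_max_def by (rule Max_eqI[OF eig_finite[OF A B] ub cE])
  then show ?thesis using x0 le by auto
qed

lemma lam_min_prop:
  fixes A B :: "complex^'n^'n"
  assumes A: "A \<in> PD" and B: "B \<in> PD"
  shows "(\<forall>x. qf B x \<ge> lam_min (B ** matrix_inv A) * qf A x) \<and>
         (\<exists>x0. x0 \<noteq> 0 \<and> qf B x0 = lam_min (B ** matrix_inv A) * qf A x0)"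
proof -
  obtain x0 c where x0: "x0 \<noteq> 0" "qf B x0 = c * qf A x0" and le: "\<forall>x. qf B x \<ge> c * qf A x"
    using ratio_min[OF A B] by blast
  have "B *v x0 = c *\<^sub>R (A *v x0)" using extreme_eig[OF A B x0(2)] le by blast
  then have cE: "c \<in> real_eigenvalues (B ** matrix_inv A)" using eig_in[OF A x0(1)] by blast
  have ub: "r \<ge> c" if rE: "r \<in> real_eigenvalues (B ** matrix_inv A)" for r
  proof -
    obtain x where x: "x \<noteq> 0" "B *v x = r *\<^sub>R (A *v x)" using eig_from[OF A rE] by blast
    have "r * qf A x \<ge> c * qf A x" using eig_ratio[OF x(2)] le by metis
    moreover have "qf A x > 0" using PD_pos[OF A x(1)] .
    ultimately show ?thesis by simp
  qed
  have "lam_min (B ** matrix_inv A) = c"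
    unfolding lam_min_def by (rule Min_eqI[OF eig_finite[OF A B] ub cE])
  then show ?thesis using x0 le by auto
qed

lemma lam_max_eqI:
  fixes A B :: "complex^'n^'n"
  assumes A: "A \<in> PD" and B: "B \<in> PD" and le: "\<And>x. qf B x \<le> c * qf A x"
    and x0: "x0 \<noteq> 0" "qf B x0 = c * qf A x0"
  shows "lam_max (B ** matrix_inv A) = c"
proof -
  let ?L = "lam_max (B ** matrix_inv A)"
  obtain x1 where x1: "x1 \<noteq> 0" "qf B x1 = ?L * qf A x1" and L: "\<forall>x. qf B x \<le> ?L * qf A x"
    using lam_max_prop[OF A B] by blast
  have "?L * qf A x1 \<le> c * qf A x1" using le[of x1] x1(2) by simp
  then have "?L \<le> c" using PD_pos[OF A x1(1)] by simp
  moreover have "c * qf A x0 \<le> ?L * qf A x0" using L x0(2) by metis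
  then have "c \<le> ?L" using PD_pos[OF A x0(1)] by simp
  ultimately show ?thesis by simp
qed

lemma lam_min_eqI:
  fixes A B :: "complex^'n^'n"
  assumes A: "A \<in> PD" and B: "B \<in> PD" and le: "\<And>x. qf B x \<ge> c * qf A x"
    and x0: "x0 \<noteq> 0" "qf B x0 = c * qf A x0"
  shows "lam_min (B ** matrix_inv A) = c"
proof -
  let ?L = "lam_min (B ** matrix_inv A)"
  obtain x1 where x1: "x1 \<noteq> 0" "qf B x1 = ?L * qf A x1" and L: "\<forall>x. qf B x \<ge> ?L * qf A x"
    using lam_min_prop[OF A B] by blast
  have "?L * qf A x1 \<ge> c * qf A x1" using le[of x1] x1(2) by simp
  then have "?L \<ge> c" using PD_pos[OF A x1(1)] by simp
  moreover have "c * qf A x0 \<ge> ?L * qf A x0" using L x0(2) by metis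
  then have "c \<ge> ?L" using PD_pos[OF A x0(1)] by simp
  ultimately show ?thesis by simp
qed

lemma lam_pos:
  fixes A B :: "complex^'n^'n"
  assumes A: "A \<in> PD" and B: "B \<in> PD"
  shows "lam_min (B ** matrix_inv A) > 0" "lam_max (B ** matrix_inv A) > 0"
    "lam_min (B ** matrix_inv A) \<le> lam_max (B ** matrix_inv A)"
proof -
  obtain x0 where x0: "x0 \<noteq> 0" "qf B x0 = lam_min (B ** matrix_inv A) * qf A x0"
    and L: "\<forall>x. qf B x \<le> lam_max (B ** matrix_inv A) * qf A x"
    using lam_min_prop[OF A B] lam_max_prop[OF A B] by blast
  have a: "qf A x0 > 0" "qf B x0 > 0" using PD_pos[OF A x0(1)] PD_pos[OF B x0(1)] by auto
  show p: "lam_min (B ** matrix_inv A) > 0" using a x0(2) by (metis zero_less_mult_pos2)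
  have "lam_min (B ** matrix_inv A) * qf A x0 \<le> lam_max (B ** matrix_inv A) * qf A x0"
    using L x0(2) by metis
  then show "lam_min (B ** matrix_inv A) \<le> lam_max (B ** matrix_inv A)" using a by simp
  then show "lam_max (B ** matrix_inv A) > 0" using p by simp
qed

lemma mu_eq:
  fixes A B :: "complex^'n^'n"
  assumes A: "A \<in> PD" and B: "B \<in> PD"
  shows "mu A B = (1 / (sqrt (lam_min (B ** matrix_inv A)) + sqrt (lam_max (B ** matrix_inv A)))) *\<^sub>R B
     + (sqrt (lam_min (B ** matrix_inv A)) * sqrt (lam_max (B ** matrix_inv A)) /
        (sqrt (lam_min (B ** matrix_inv A)) + sqrt (lam_max (B ** matrix_inv A)))) *\<^sub>R A"
  unfolding mu_def Let_def by (simp add: real_sqrt_mult scaleR_add_right)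

lemma qf_mu:
  fixes A B :: "complex^'n^'n"
  assumes A: "A \<in> PD" and B: "B \<in> PD"
  shows "qf (mu A B) x = (qf B x + sqrt (lam_min (B ** matrix_inv A)) * sqrt (lam_max (B ** matrix_inv A)) * qf A x)
     / (sqrt (lam_min (B ** matrix_inv A)) + sqrt (lam_max (B ** matrix_inv A)))"
  unfolding mu_eq[OF A B] qf_add qf_scaleR by (simp add: add_divide_distrib)

lemma mu_PD:
  fixes A B :: "complex^'n^'n"
  assumes A: "A \<in> PD" and B: "B \<in> PD"
  shows "mu A B \<in> PD"
proof -
  have p: "lam_min (B ** matrix_inv A) > 0" "lam_max (B ** matrix_inv A) > 0" using lam_pos[OF A B] by auto
  have h: "hermitian (mu A B)" unfolding mu_eq[OF A B]
    using A B by (intro herm_add herm_scaleR) (auto simp: PD_herm)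
  have "Re (qform (mu A B) x) > 0" if "x \<noteq> 0" for x
  proof -
    have "qf (mu A B) x > 0" unfolding qf_mu[OF A B]
      using PD_pos[OF A that] PD_pos[OF B that] p
      by (intro divide_pos_pos add_pos_pos mult_pos_pos) auto
    then show ?thesis by (simp add: qf_def)
  qed
  with h show ?thesis by (simp add: PD_def posdef_def)
qed

lemma mat1_PD: "(mat 1 :: complex^'n^'n) \<in> PD"
proof -
  have h: "hermitian (mat 1 :: complex^'n^'n)"
    by (simp add: hermitian_def cadj_def mat_def vec_eq_iff)
  have "Re (qform (mat 1) x) > 0" if "x \<noteq> (0::complex^'n)" for x
  proof -
    have e: "Re (qform (mat 1) x) = (\<Sum>i\<in>UNIV. (cmod (x$i))^2)"
      by (simp only: qform_def matrix_vector_mul_lid Re_sum cnj_mult_self)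
    have "(\<Sum>i\<in>UNIV. (cmod (x$i))^2) \<noteq> 0"
    proof
      assume "(\<Sum>i\<in>UNIV. (cmod (x$i))^2) = 0"
      then have "\<forall>i\<in>UNIV. (cmod (x$i))^2 = 0" by (subst sum_nonneg_eq_0_iff[symmetric]) auto
      then have "x = 0" by (simp add: vec_eq_iff)
      with that show False by simp
    qed
    moreover have "(\<Sum>i\<in>UNIV. (cmod (x$i))^2) \<ge> 0" by (simp add: sum_nonneg)
    ultimately show ?thesis unfolding e by linarith
  qed
  with h show ?thesis by (simp add: PD_def posdef_def)
qed

lemma minv_mat1: "matrix_inv (mat 1 :: complex^'n^'n) = mat 1"
proof -
  have "invertible (mat 1 :: complex^'n^'n)" using PD_invertible[OF mat1_PD] .
  then have "mat 1 ** matrix_inv (mat 1 :: complex^'n^'n) = mat 1" using minv by blast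
  then show ?thesis by simp
qed

lemma ar_i: "(s::real) > 0 \<Longrightarrow> t > 0 \<Longrightarrow> b \<le> t^2 * a \<Longrightarrow> (b + s*t*a)/(s+t) \<le> t * a"
  by (simp add: pos_divide_le_eq power2_eq_square algebra_simps)
lemma ar_i_eq: "(s::real) > 0 \<Longrightarrow> t > 0 \<Longrightarrow> b = t^2 * a \<Longrightarrow> (b + s*t*a)/(s+t) = t * a"
  by (simp add: field_simps power2_eq_square)
lemma ar_ii: assumes "(s::real) > 0" "t > 0" "s^2 * a \<le> b" shows "a \<le> 1/s * ((b + s*t*a)/(s+t))"
proof -
  have D: "s*(s+t) > 0" using assms by simp
  have e: "1/s * ((b + s*t*a)/(s+t)) = (b + s*t*a)/(s*(s+t))" by simp
  have "a * (s*(s+t)) \<le> b + s*t*a" using assms(3) by (simp add: algebra_simps power2_eq_square)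
  then show ?thesis unfolding e using pos_le_divide_eq[OF D] by blast
qed
lemma ar_ii_eq: assumes "(s::real) > 0" "t > 0" "b = s^2 * a" shows "a = 1/s * ((b + s*t*a)/(s+t))"
proof -
  have D: "s*(s+t) > 0" using assms by simp
  have e: "1/s * ((b + s*t*a)/(s+t)) = (b + s*t*a)/(s*(s+t))" by simp
  have "a * (s*(s+t)) = b + s*t*a" using assms(3) by (simp add: algebra_simps power2_eq_square)
  then show ?thesis unfolding e using D assms(1,2) by (simp add: eq_divide_eq)
qed
lemma ar_iii: "(s::real) > 0 \<Longrightarrow> t > 0 \<Longrightarrow> b \<le> t^2 * a \<Longrightarrow> b \<le> t * ((b + s*t*a)/(s+t))"
  by (simp add: field_simps power2_eq_square)
lemma ar_iii_eq: "(s::real) > 0 \<Longrightarrow> t > 0 \<Longrightarrow> b = t^2 * a \<Longrightarrow> b = t * ((b + s*t*a)/(s+t))"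
  by (simp add: field_simps power2_eq_square)
lemma ar_iv: "(s::real) > 0 \<Longrightarrow> t > 0 \<Longrightarrow> s^2 * a \<le> b \<Longrightarrow> (b + s*t*a)/(s+t) \<le> 1/s * b"
  by (simp add: field_simps power2_eq_square)
lemma ar_iv_eq: "(s::real) > 0 \<Longrightarrow> t > 0 \<Longrightarrow> b = s^2 * a \<Longrightarrow> (b + s*t*a)/(s+t) = 1/s * b"
  by (simp add: field_simps power2_eq_square)
lemma ar_v: "(s::real) > 0 \<Longrightarrow> t > 0 \<Longrightarrow> s^2 * a \<le> b \<Longrightarrow> (b + s*t*a)/(s+t) \<ge> s * a"
  by (simp add: field_simps power2_eq_square)
lemma ar_v_eq: "(s::real) > 0 \<Longrightarrow> t > 0 \<Longrightarrow> b = s^2 * a \<Longrightarrow> (b + s*t*a)/(s+t) = s * a"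
  by (simp add: field_simps power2_eq_square)

lemma lam_mu:
  fixes A B :: "complex^'n^'n"
  assumes A: "A \<in> PD" and B: "B \<in> PD"
  defines "m \<equiv> lam_min (B ** matrix_inv A)" and "M \<equiv> lam_max (B ** matrix_inv A)"
  shows "lam_max (mu A B ** matrix_inv A) = sqrt M"
    and "lam_max (A ** matrix_inv (mu A B)) = 1 / sqrt m"
    and "lam_max (B ** matrix_inv (mu A B)) = sqrt M"
    and "lam_max (mu A B ** matrix_inv B) = 1 / sqrt m"
    and "lam_min (mu A B ** matrix_inv A) = sqrt m"
    and "lam_max (A ** matrix_inv B) = 1 / m"
    and "lam_min (A ** matrix_inv B) = 1 / M"
proof -
  obtain xM where xM: "xM \<noteq> 0" "qf B xM = M * qf A xM" and upM: "\<forall>x. qf B x \<le> M * qf A x"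
    using lam_max_prop[OF A B] unfolding M_def by blast
  obtain xm where xm: "xm \<noteq> 0" "qf B xm = m * qf A xm" and lowm: "\<forall>x. qf B x \<ge> m * qf A x"
    using lam_min_prop[OF A B] unfolding m_def by blast
  have mp: "m > 0" and Mp: "M > 0" using lam_pos[OF A B] by (auto simp: m_def M_def)
  define s where "s = sqrt m"
  define t where "t = sqrt M"
  have sp: "s > 0" and tp: "t > 0" using mp Mp by (auto simp: s_def t_def)
  have s2: "s^2 = m" and t2: "t^2 = M" using mp Mp by (auto simp: s_def t_def)
  have qfmu: "qf (mu A B) x = (qf B x + s*t*qf A x)/(s+t)" for x
    unfolding qf_mu[OF A B] s_def t_def m_def M_def ..
  have mP: "mu A B \<in> PD" by (rule mu_PD[OF A B])
  have upM': "qf B x \<le> t^2 * qf A x" for x using upM t2 by simp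
  have lowm': "s^2 * qf A x \<le> qf B x" for x using lowm s2 by simp
  have xM': "qf B xM = t^2 * qf A xM" using xM t2 by simp
  have xm': "qf B xm = s^2 * qf A xm" using xm s2 by simp
  show "lam_max (mu A B ** matrix_inv A) = sqrt M"
    unfolding t_def[symmetric]
    by (rule lam_max_eqI[OF A mP _ xM(1)]) (simp_all add: qfmu ar_i[OF sp tp upM'] ar_i_eq[OF sp tp xM'])
  show "lam_max (A ** matrix_inv (mu A B)) = 1 / sqrt m"
    unfolding s_def[symmetric]
    by (rule lam_max_eqI[OF mP A _ xm(1)]) (simp_all only: qfmu ar_ii[OF sp tp lowm'] ar_ii_eq[OF sp tp xm', symmetric])
  show "lam_max (B ** matrix_inv (mu A B)) = sqrt M"
    unfolding t_def[symmetric]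
    by (rule lam_max_eqI[OF mP B _ xM(1)]) (simp_all only: qfmu ar_iii[OF sp tp upM'] ar_iii_eq[OF sp tp xM', symmetric])
  show "lam_max (mu A B ** matrix_inv B) = 1 / sqrt m"
    unfolding s_def[symmetric]
    by (rule lam_max_eqI[OF B mP _ xm(1)]) (simp_all only: qfmu ar_iv[OF sp tp lowm'] ar_iv_eq[OF sp tp xm'])
  show "lam_min (mu A B ** matrix_inv A) = sqrt m"
    unfolding s_def[symmetric]
    by (rule lam_min_eqI[OF A mP _ xm(1)]) (simp_all only: qfmu ar_v[OF sp tp lowm'] ar_v_eq[OF sp tp xm'])
  show "lam_max (A ** matrix_inv B) = 1 / m"
  proof (rule lam_max_eqI[OF B A _ xm(1)])
    fix x show "qf A x \<le> 1 / m * qf B x" using lowm mp by (simp add: field_simps)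
  next
    show "qf A xm = 1 / m * qf B xm" using xm mp by (simp add: field_simps)
  qed
  show "lam_min (A ** matrix_inv B) = 1 / M"
  proof (rule lam_min_eqI[OF B A _ xM(1)])
    fix x show "qf A x \<ge> 1 / M * qf B x" using upM Mp by (simp add: field_simps)
  next
    show "qf A xM = 1 / M * qf B xM" using xM Mp by (simp add: field_simps)
  qed
qed

lemma thompson_mid:
  fixes A B :: "complex^'n^'n"
  assumes A: "A \<in> PD" and B: "B \<in> PD"
  shows "thompson A (mu A B) = thompson A B / 2 \<and> thompson (mu A B) B = thompson A B / 2"
proof -
  have mp: "lam_min (B ** matrix_inv A) > 0" and Mp: "lam_max (B ** matrix_inv A) > 0"
    using lam_pos[OF A B] by auto
  have e1: "thompson A B = max (ln (lam_max (B ** matrix_inv A))) (- ln (lam_min (B ** matrix_inv A)))"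
    unfolding thompson_def lam_mu(6)[OF A B] using mp by (simp add: ln_div)
  have e2: "thompson A (mu A B) = max (ln (lam_max (B ** matrix_inv A)) / 2) (- ln (lam_min (B ** matrix_inv A)) / 2)"
    unfolding thompson_def lam_mu(1,2)[OF A B] using mp Mp by (simp add: ln_div ln_sqrt)
  have e3: "thompson (mu A B) B = max (ln (lam_max (B ** matrix_inv A)) / 2) (- ln (lam_min (B ** matrix_inv A)) / 2)"
    unfolding thompson_def lam_mu(3,4)[OF A B] using mp Mp by (simp add: ln_div ln_sqrt)
  show ?thesis unfolding e1 e2 e3 by (simp add: max_def)
qed

lemma mu_sym:
  fixes A B :: "complex^'n^'n"
  assumes A: "A \<in> PD" and B: "B \<in> PD"
  shows "mu A B = mu B A"
proof -
  have mp: "lam_min (B ** matrix_inv A) > 0" and Mp: "lam_max (B ** matrix_inv A) > 0"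
    using lam_pos[OF A B] by auto
  define s where "s = sqrt (lam_min (B ** matrix_inv A))"
  define t where "t = sqrt (lam_max (B ** matrix_inv A))"
  have sp: "s > 0" and tp: "t > 0" using mp Mp by (auto simp: s_def t_def)
  have e1: "mu A B = (1/(s+t)) *\<^sub>R B + (s*t/(s+t)) *\<^sub>R A"
    unfolding mu_eq[OF A B] s_def t_def ..
  have s': "sqrt (lam_max (A ** matrix_inv B)) = 1/s" unfolding lam_mu(6)[OF A B] s_def by (simp add: real_sqrt_divide)
  have t': "sqrt (lam_min (A ** matrix_inv B)) = 1/t" unfolding lam_mu(7)[OF A B] t_def by (simp add: real_sqrt_divide)
  have e2: "mu B A = (1/(1/t+1/s)) *\<^sub>R A + (1/t*(1/s)/(1/t+1/s)) *\<^sub>R B"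
    unfolding mu_eq[OF B A] s' t' ..
  have c1: "1/(1/t+1/s) = s*t/(s+t)" using sp tp by (simp add: field_simps)
  have c2: "1/t*(1/s)/(1/t+1/s) = 1/(s+t)" using sp tp by (simp add: field_simps)
  show ?thesis unfolding e1 e2 c1 c2 by (simp add: add.commute)
qed

lemma qf_le_loewner: assumes "loewner_le A B" shows "qf A x \<le> qf B x"
proof -
  have "0 \<le> qf (B - A) x" using assms by (simp add: loewner_le_def possemidef_def qf_def)
  then show ?thesis by (simp add: qf_diff)
qed

lemma loewner_intro: "hermitian A \<Longrightarrow> hermitian B \<Longrightarrow> (\<And>x. qf A x \<le> qf B x) \<Longrightarrow> loewner_le A B"
  unfolding loewner_le_def possemidef_def using qf_diff[of B A] by (auto simp: qf_def herm_diff)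

lemma mu_loewner:
  fixes A B :: "complex^'n^'n"
  assumes A: "A \<in> PD" and B: "B \<in> PD" and le: "loewner_le A B"
  shows "loewner_le A (mu A B) \<and> loewner_le (mu A B) B"
proof -
  obtain xm where xm: "xm \<noteq> 0" "qf B xm = lam_min (B ** matrix_inv A) * qf A xm"
    and lowm: "\<forall>x. qf B x \<ge> lam_min (B ** matrix_inv A) * qf A x"
    using lam_min_prop[OF A B] by blast
  have mp: "lam_min (B ** matrix_inv A) > 0" and Mp: "lam_max (B ** matrix_inv A) > 0"
    and mM: "lam_min (B ** matrix_inv A) \<le> lam_max (B ** matrix_inv A)"
    using lam_pos[OF A B] by auto
  define s where "s = sqrt (lam_min (B ** matrix_inv A))"
  define t where "t = sqrt (lam_max (B ** matrix_inv A))"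
  have sp: "s > 0" and tp: "t > 0" using mp Mp by (auto simp: s_def t_def)
  have st: "s \<le> t" using mM by (simp add: s_def t_def)
  have s2: "s^2 = lam_min (B ** matrix_inv A)" using mp by (simp add: s_def)
  have qfmu: "qf (mu A B) x = (qf B x + s*t*qf A x)/(s+t)" for x
    unfolding qf_mu[OF A B] s_def t_def ..
  have "lam_min (B ** matrix_inv A) * qf A xm \<ge> 1 * qf A xm" using xm(2) qf_le_loewner[OF le, of xm] by simp
  then have m1: "lam_min (B ** matrix_inv A) \<ge> 1" using PD_pos[OF A xm(1)] by (simp add: mult_le_cancel_right)
  then have s1: "s \<ge> 1" by (simp add: s_def)
  have low: "s^2 * qf A x \<le> qf B x" for x using lowm s2 by simp
  have hA: "hermitian A" and hB: "hermitian B" and hM: "hermitian (mu A B)"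
    using A B mu_PD[OF A B] by (auto simp: PD_herm)
  have "qf A x \<le> qf (mu A B) x" for x
  proof -
    have a: "qf A x \<ge> 0" using PD_nonneg[OF A] .
    have "(s - 1) * (s + t) * qf A x \<ge> 0" using s1 sp tp a by simp
    then have "qf A x * (s + t) \<le> qf B x + s*t*qf A x" using low[of x]
      by (simp add: algebra_simps power2_eq_square)
    then show ?thesis unfolding qfmu using sp tp by (simp add: pos_le_divide_eq)
  qed
  moreover have "qf (mu A B) x \<le> qf B x" for x
  proof -
    have a: "qf A x \<ge> 0" using PD_nonneg[OF A] .
    have "(s + t - 1) * (s^2 * qf A x) \<le> (s + t - 1) * qf B x" using low[of x] s1 tp
      by (intro mult_left_mono) auto
    moreover have "s * (s - 1) * (s + t) * qf A x \<ge> 0" using s1 sp tp a by simp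
    ultimately have "qf B x + s*t*qf A x \<le> qf B x * (s + t)"
      by (simp add: algebra_simps power2_eq_square)
    then show ?thesis unfolding qfmu using sp tp by (simp add: pos_divide_le_eq)
  qed
  ultimately show ?thesis using hA hB hM by (auto intro: loewner_intro)
qed

lemma lam_mono:
  fixes A B1 B2 :: "complex^'n^'n"
  assumes A: "A \<in> PD" and B1: "B1 \<in> PD" and B2: "B2 \<in> PD" and le: "\<And>x. qf B1 x \<le> qf B2 x"
  shows "lam_max (B1 ** matrix_inv A) \<le> lam_max (B2 ** matrix_inv A)"
    and "lam_min (B1 ** matrix_inv A) \<le> lam_min (B2 ** matrix_inv A)"
proof -
  obtain x1 where x1: "x1 \<noteq> 0" "qf B1 x1 = lam_max (B1 ** matrix_inv A) * qf A x1"
    using lam_max_prop[OF A B1] by blast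
  have "lam_max (B1 ** matrix_inv A) * qf A x1 \<le> lam_max (B2 ** matrix_inv A) * qf A x1"
    using x1(2) le[of x1] lam_max_prop[OF A B2] by (metis order_trans)
  then show "lam_max (B1 ** matrix_inv A) \<le> lam_max (B2 ** matrix_inv A)"
    using PD_pos[OF A x1(1)] by (simp add: mult_le_cancel_right)
  obtain x2 where x2: "x2 \<noteq> 0" "qf B2 x2 = lam_min (B2 ** matrix_inv A) * qf A x2"
    using lam_min_prop[OF A B2] by blast
  have "lam_min (B1 ** matrix_inv A) * qf A x2 \<le> lam_min (B2 ** matrix_inv A) * qf A x2"
    using x2(2) le[of x2] lam_min_prop[OF A B1] by (metis order_trans)
  then show "lam_min (B1 ** matrix_inv A) \<le> lam_min (B2 ** matrix_inv A)"
    using PD_pos[OF A x2(1)] by (simp add: mult_le_cancel_right)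
qed

lemma part7:
  fixes S1 S2 :: "complex^'n^'n"
  assumes S1: "S1 \<in> PD" and S2: "S2 \<in> PD" and le: "loewner_le S1 S2"
  shows "lam_max (mu (mat 1) S1) \<le> lam_max (mu (mat 1) S2) \<and> lam_min (mu (mat 1) S1) \<le> lam_min (mu (mat 1) S2)"
proof -
  have I: "(mat 1 :: complex^'n^'n) \<in> PD" by (rule mat1_PD)
  have e: "P = P ** matrix_inv (mat 1)" for P :: "complex^'n^'n" by (simp add: minv_mat1)
  have m1: "lam_max (mu (mat 1) S) = sqrt (lam_max (S ** matrix_inv (mat 1)))" if "S \<in> PD" for S :: "complex^'n^'n"
    using lam_mu(1)[OF I that] e by metis
  have m2: "lam_min (mu (mat 1) S) = sqrt (lam_min (S ** matrix_inv (mat 1)))" if "S \<in> PD" for S :: "complex^'n^'n"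
    using lam_mu(5)[OF I that] e by metis
  show ?thesis unfolding m1[OF S1] m2[OF S1] m1[OF S2] m2[OF S2]
    using lam_mono[OF I S1 S2 qf_le_loewner[OF le]] by simp
qed

lemma PD_scaleR: "(c::real) > 0 \<Longrightarrow> A \<in> PD \<Longrightarrow> c *\<^sub>R A \<in> PD"
  unfolding PD_def posdef_def using herm_scaleR by (auto simp: qform_scaleR)

lemma mu_scale:
  fixes A B :: "complex^'n^'n"
  assumes A: "A \<in> PD" and B: "B \<in> PD" and a: "a > 0" and b: "b > 0"
  shows "mu (a *\<^sub>R A) (b *\<^sub>R B) = sqrt (a * b) *\<^sub>R mu A B"
proof -
  have aA: "a *\<^sub>R A \<in> PD" and bB: "b *\<^sub>R B \<in> PD" using PD_scaleR a b A B by auto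
  obtain xM where xM: "xM \<noteq> 0" "qf B xM = lam_max (B ** matrix_inv A) * qf A xM"
    and upM: "\<forall>x. qf B x \<le> lam_max (B ** matrix_inv A) * qf A x"
    using lam_max_prop[OF A B] by blast
  obtain xm where xm: "xm \<noteq> 0" "qf B xm = lam_min (B ** matrix_inv A) * qf A xm"
    and lowm: "\<forall>x. qf B x \<ge> lam_min (B ** matrix_inv A) * qf A x"
    using lam_min_prop[OF A B] by blast
  have LM: "lam_max ((b *\<^sub>R B) ** matrix_inv (a *\<^sub>R A)) = b / a * lam_max (B ** matrix_inv A)"
  proof (rule lam_max_eqI[OF aA bB _ xM(1)])
    fix x show "qf (b *\<^sub>R B) x \<le> b / a * lam_max (B ** matrix_inv A) * qf (a *\<^sub>R A) x"
      using upM a b by (simp add: qf_scaleR mult_left_mono)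
  next
    show "qf (b *\<^sub>R B) xM = b / a * lam_max (B ** matrix_inv A) * qf (a *\<^sub>R A) xM"
      using xM a by (simp add: qf_scaleR)
  qed
  have Lm: "lam_min ((b *\<^sub>R B) ** matrix_inv (a *\<^sub>R A)) = b / a * lam_min (B ** matrix_inv A)"
  proof (rule lam_min_eqI[OF aA bB _ xm(1)])
    fix x show "qf (b *\<^sub>R B) x \<ge> b / a * lam_min (B ** matrix_inv A) * qf (a *\<^sub>R A) x"
      using lowm a b by (simp add: qf_scaleR mult_left_mono)
  next
    show "qf (b *\<^sub>R B) xm = b / a * lam_min (B ** matrix_inv A) * qf (a *\<^sub>R A) xm"
      using xm a by (simp add: qf_scaleR)
  qed
  have mp: "lam_min (B ** matrix_inv A) > 0" and Mp: "lam_max (B ** matrix_inv A) > 0"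
    using lam_pos[OF A B] by auto
  define s where "s = sqrt (lam_min (B ** matrix_inv A))"
  define t where "t = sqrt (lam_max (B ** matrix_inv A))"
  define p where "p = sqrt a"
  define q where "q = sqrt b"
  have sp: "s > 0" and tp: "t > 0" using mp Mp by (auto simp: s_def t_def)
  have pp: "p > 0" and qp: "q > 0" using a b by (auto simp: p_def q_def)
  have ap: "a = p^2" and bq: "b = q^2" using a b by (auto simp: p_def q_def)
  have s': "sqrt (b / a * lam_min (B ** matrix_inv A)) = q / p * s"
    by (simp add: s_def p_def q_def real_sqrt_mult real_sqrt_divide)
  have t': "sqrt (b / a * lam_max (B ** matrix_inv A)) = q / p * t"
    by (simp add: t_def p_def q_def real_sqrt_mult real_sqrt_divide)
  have ab: "sqrt (a * b) = p * q" by (simp add: p_def q_def real_sqrt_mult)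
  have "mu (a *\<^sub>R A) (b *\<^sub>R B) = (1 / (q/p * s + q/p * t) * b) *\<^sub>R B + (q/p * s * (q/p * t) / (q/p * s + q/p * t) * a) *\<^sub>R A"
    unfolding mu_eq[OF aA bB] LM Lm s' t' by simp
  also have "1 / (q/p * s + q/p * t) * b = p * q * (1/(s+t))"
    unfolding bq using pp qp sp tp add_pos_pos[OF mult_pos_pos[OF qp sp] mult_pos_pos[OF qp tp]]
    by (simp add: field_simps power2_eq_square)
  also have "q/p * s * (q/p * t) / (q/p * s + q/p * t) * a = p * q * (s*t/(s+t))"
  proof -
    have D: "p * (q * s) + p * (q * t) > 0" using pp qp sp tp by (simp add: add_pos_pos)
    have "(p * (p * (q * (q * (s * (s * t))))) + p * (p * (q * (q * (s * (t * t)))))) =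
          p * (q * (s * t)) * (p * (q * s) + p * (q * t))" by (simp add: algebra_simps)
    then show ?thesis unfolding ap using pp qp sp tp D
      by (simp add: field_simps power2_eq_square)
  qed
  also have "(p * q * (1 / (s + t))) *\<^sub>R B + (p * q * (s * t / (s + t))) *\<^sub>R A = sqrt (a * b) *\<^sub>R mu A B"
    unfolding ab mu_eq[OF A B] s_def[symmetric] t_def[symmetric] by (simp add: scaleR_add_right)
  finally show ?thesis .
qed

lemma cadj_mult: "cadj ((X::complex^'n^'m) ** (Y::complex^'k^'n)) = cadj Y ** cadj X"
  by (simp add: cadj_def matrix_matrix_mult_def vec_eq_iff mult.commute)

lemma cadj_cadj: "cadj (cadj X) = X"
  by (simp add: cadj_def vec_eq_iff)

lemma cadj_mat1: "cadj (mat 1 :: complex^'n^'n) = mat 1"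
  by (simp add: cadj_def mat_def vec_eq_iff)

lemma matrix_add_rdistrib': "((B + C) ** A) = (B ** A) + (C ** A)"
  by (vector matrix_matrix_mult_def sum.distrib[symmetric] field_simps)

lemma adj_swap:
  "(\<Sum>i\<in>UNIV. cnj (x$i) * ((X::complex^'n^'n) *v z)$i) = (\<Sum>i\<in>UNIV. cnj ((cadj X *v x)$i) * z$i)"
proof -
  have "(\<Sum>i\<in>UNIV. cnj (x$i) * (X *v z)$i) = (\<Sum>i\<in>UNIV. \<Sum>j\<in>UNIV. cnj (x$i) * X$i$j * z$j)"
    by (simp add: matrix_vector_mult_def sum_distrib_left mult.assoc)
  also have "\<dots> = (\<Sum>j\<in>UNIV. \<Sum>i\<in>UNIV. cnj (x$i) * X$i$j * z$j)"
    by (rule sum.swap)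
  also have "\<dots> = (\<Sum>i\<in>UNIV. cnj ((cadj X *v x)$i) * z$i)"
    by (simp add: matrix_vector_mult_def sum_distrib_right sum_distrib_left cadj_def mult_ac)
  finally show ?thesis .
qed

lemma qform_cong: "qform ((X::complex^'n^'n) ** A ** cadj X) x = qform A (cadj X *v x)"
proof -
  have "(X ** A ** cadj X) *v x = X *v (A *v (cadj X *v x))" by (simp add: matrix_vector_mul_assoc matrix_mul_assoc)
  then have "qform (X ** A ** cadj X) x = (\<Sum>i\<in>UNIV. cnj (x$i) * (X *v (A *v (cadj X *v x)))$i)"
    unfolding qform_def by simp
  also have "\<dots> = qform A (cadj X *v x)" unfolding qform_def by (rule adj_swap)
  finally show ?thesis .
qed

lemma qf_cong: "qf ((X::complex^'n^'n) ** A ** cadj X) x = qf A (cadj X *v x)"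
  by (simp add: qf_def qform_cong)

lemma cong_props:
  fixes X :: "complex^'n^'n"
  assumes X: "invertible X"
  shows "cadj (matrix_inv X) ** cadj X = mat 1" "cadj X ** cadj (matrix_inv X) = mat 1"
proof -
  have "X ** matrix_inv X = mat 1" "matrix_inv X ** X = mat 1" using minv[OF X] by auto
  then show "cadj (matrix_inv X) ** cadj X = mat 1" "cadj X ** cadj (matrix_inv X) = mat 1"
    by (metis cadj_mult cadj_mat1)+
qed

lemma cong_PD:
  fixes X A :: "complex^'n^'n"
  assumes A: "A \<in> PD" and X: "invertible X"
  shows "X ** A ** cadj X \<in> PD"
proof -
  have hA: "hermitian A" using A by (simp add: PD_herm)
  have h: "hermitian (X ** A ** cadj X)"
    using hA unfolding hermitian_def by (simp add: cadj_mult cadj_cadj matrix_mul_assoc)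
  have "qf (X ** A ** cadj X) x > 0" if "x \<noteq> 0" for x
  proof -
    have "cadj X *v x \<noteq> 0"
    proof
      assume "cadj X *v x = 0"
      then have "cadj (matrix_inv X) *v (cadj X *v x) = 0" by simp
      then have "x = 0" by (simp add: matrix_vector_mul_assoc cong_props(1)[OF X])
      with that show False by simp
    qed
    then show ?thesis unfolding qf_cong using PD_pos[OF A] by blast
  qed
  with h show ?thesis by (simp add: PD_def posdef_def qf_def)
qed

lemma mu_cong:
  fixes X A B :: "complex^'n^'n"
  assumes A: "A \<in> PD" and B: "B \<in> PD" and X: "invertible X"
  shows "mu (X ** A ** cadj X) (X ** B ** cadj X) = X ** mu A B ** cadj X"
proof -
  have XA: "X ** A ** cadj X \<in> PD" and XB: "X ** B ** cadj X \<in> PD" using cong_PD A B X by auto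
  define Y where "Y = cadj (matrix_inv X)"
  have YX: "cadj X *v (Y *v y) = y" for y by (simp add: Y_def matrix_vector_mul_assoc cong_props(2)[OF X])
  obtain xM where xM: "xM \<noteq> 0" "qf B xM = lam_max (B ** matrix_inv A) * qf A xM"
    and upM: "\<forall>x. qf B x \<le> lam_max (B ** matrix_inv A) * qf A x"
    using lam_max_prop[OF A B] by blast
  obtain xm where xm: "xm \<noteq> 0" "qf B xm = lam_min (B ** matrix_inv A) * qf A xm"
    and lowm: "\<forall>x. qf B x \<ge> lam_min (B ** matrix_inv A) * qf A x"
    using lam_min_prop[OF A B] by blast
  have nzM: "Y *v xM \<noteq> 0" using YX[of xM] xM(1) by force
  have nzm: "Y *v xm \<noteq> 0" using YX[of xm] xm(1) by force
  have LM: "lam_max ((X ** B ** cadj X) ** matrix_inv (X ** A ** cadj X)) = lam_max (B ** matrix_inv A)"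
    by (rule lam_max_eqI[OF XA XB _ nzM]) (simp_all add: qf_cong YX upM xM(2))
  have Lm: "lam_min ((X ** B ** cadj X) ** matrix_inv (X ** A ** cadj X)) = lam_min (B ** matrix_inv A)"
    by (rule lam_min_eqI[OF XA XB _ nzm]) (simp_all add: qf_cong YX lowm xm(2))
  show ?thesis
    unfolding mu_eq[OF XA XB] mu_eq[OF A B] LM Lm
    by (simp add: matrix_add_ldistrib matrix_add_rdistrib' matrix_scalar_ac scalar_matrix_assoc)
qed

lemma qf_mat1: "qf (mat 1) (x::complex^'n) = (norm x)^2"
proof -
  have "qf (mat 1) x = (\<Sum>i\<in>UNIV. (cmod (x$i))^2)"
    by (simp only: qf_def qform_def matrix_vector_mul_lid Re_sum cnj_mult_self)
  also have "\<dots> = (norm x)^2"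
    unfolding norm_vec_def L2_set_def by (simp add: sum_nonneg)
  finally show ?thesis .
qed

lemma qf_bound: "\<bar>qf (E::complex^'n^'n) x\<bar> \<le> (\<Sum>i\<in>UNIV. \<Sum>j\<in>UNIV. cmod (E$i$j)) * (norm x)^2"
proof -
  have "\<bar>qf E x\<bar> \<le> cmod (qform E x)" unfolding qf_def by (rule abs_Re_le_cmod)
  also have "qform E x = (\<Sum>i\<in>UNIV. \<Sum>j\<in>UNIV. cnj (x$i) * (E$i$j * x$j))"
    by (simp add: qform_def matrix_vector_mult_def sum_distrib_left)
  also have "cmod \<dots> \<le> (\<Sum>i\<in>UNIV. \<Sum>j\<in>UNIV. cmod (cnj (x$i) * (E$i$j * x$j)))"
    by (rule order_trans[OF norm_sum sum_mono[OF norm_sum]])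
  also have "\<dots> \<le> (\<Sum>i\<in>UNIV. \<Sum>j\<in>UNIV. cmod (E$i$j) * (norm x)^2)"
  proof (intro sum_mono)
    fix i j
    have "cmod (x$i) * cmod (x$j) \<le> norm x * norm x"
    proof (intro mult_mono)
      show "cmod (x$i) \<le> norm x" by (rule Finite_Cartesian_Product.norm_nth_le)
      show "cmod (x$j) \<le> norm x" by (rule Finite_Cartesian_Product.norm_nth_le)
    qed auto
    then have "cmod (E$i$j) * (cmod (x$i) * cmod (x$j)) \<le> cmod (E$i$j) * (norm x)^2"
      by (intro mult_left_mono) (auto simp: power2_eq_square)
    then show "cmod (cnj (x$i) * (E$i$j * x$j)) \<le> cmod (E$i$j) * (norm x)^2"
      by (simp add: norm_mult mult_ac)
  qed
  also have "\<dots> = (\<Sum>i\<in>UNIV. \<Sum>j\<in>UNIV. cmod (E$i$j)) * (norm x)^2"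
    by (simp add: sum_distrib_right)
  finally show ?thesis .
qed

lemma K_bound: "(\<Sum>i\<in>UNIV. \<Sum>j\<in>UNIV. cmod ((E::complex^'n^'n)$i$j)) \<le> real (CARD('n))^2 * norm E"
proof -
  have "(\<Sum>i\<in>UNIV. \<Sum>j\<in>UNIV. cmod (E$i$j)) \<le> (\<Sum>i\<in>(UNIV::'n set). \<Sum>j\<in>(UNIV::'n set). norm E)"
  proof (intro sum_mono)
    fix i j :: 'n
    have "cmod (E$i$j) \<le> norm (E$i)" by (rule Finite_Cartesian_Product.norm_nth_le)
    also have "norm (E$i) \<le> norm E" by (rule Finite_Cartesian_Product.norm_nth_le)
    finally show "cmod (E$i$j) \<le> norm E" .
  qed
  then show ?thesis by (simp add: power2_eq_square)
qed

lemma sand_up: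
  fixes e M M0 a1 a01 b1 b01 :: real
  assumes e0: "e \<ge> 0" and e1: "e \<le> 1/2" and Mp: "M > 0" and a1: "a1 > 0"
    and da: "\<bar>a1 - a01\<bar> \<le> e * a01" and b1: "b1 = M * a1" and db: "b1 \<le> b01 + e * a01"
    and b01: "b01 \<le> M0 * a01" and M0: "M0 > 0"
  shows "M \<le> M0 + 2 * e * (1 + M0)"
proof -
  have "a1 \<le> (1 + e) * a01" using da by (simp add: algebra_simps)
  then have a01: "a01 > 0" using a1 e0
    by (smt (verit) mult_nonneg_nonpos)
  have "(1 - e) * a01 \<le> a1" using da by (simp add: algebra_simps)
  then have "M * ((1 - e) * a01) \<le> M * a1" using Mp by (simp add: mult_left_mono)
  also have "\<dots> \<le> (M0 + e) * a01" using b1 db b01 by (simp add: algebra_simps)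
  finally have "(M * (1 - e)) * a01 \<le> (M0 + e) * a01" by (simp add: mult_ac)
  then have 1: "M * (1 - e) \<le> M0 + e" using a01 by (simp add: mult_le_cancel_right_pos)
  have "e * (1 - 2*e) * (1 + M0) \<ge> 0" using e0 e1 M0 by simp
  then have "M0 + e \<le> (M0 + 2 * e * (1 + M0)) * (1 - e)" by (simp add: algebra_simps)
  with 1 have "M * (1 - e) \<le> (M0 + 2 * e * (1 + M0)) * (1 - e)" by linarith
  then show ?thesis using e1 by (simp add: mult_le_cancel_right_pos)
qed

lemma sand_low:
  fixes e M M0 a0' a00 b0' b00 :: real
  assumes e0: "e \<ge> 0" and e1: "e \<le> 1/2" and Mp: "M > 0" and a00: "a00 > 0"
    and da: "\<bar>a0' - a00\<bar> \<le> e * a00" and b00: "b00 = M0 * a00" and db: "\<bar>b0' - b00\<bar> \<le> e * a00"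
    and b0': "b0' \<le> M * a0'" and up: "M \<le> M0 + 2 * e * (1 + M0)" and M0: "M0 > 0"
  shows "M0 \<le> M + 2 * e * (1 + M0)"
proof -
  have "a0' \<le> (1 + e) * a00" using da by (simp add: algebra_simps)
  then have "M * a0' \<le> M * ((1 + e) * a00)" using Mp by (simp add: mult_left_mono)
  then have "M0 * a00 \<le> (M * (1 + e) + e) * a00" using b00 db b0' by (simp add: algebra_simps)
  then have 1: "M0 \<le> M * (1 + e) + e" using a00 by (simp add: mult_le_cancel_right_pos)
  have "e * M \<le> e * (M0 + 2 * e * (1 + M0))" using up e0 by (simp add: mult_left_mono)
  moreover have "e * (2 * e * (1 + M0)) \<le> e * (1 + M0)" using e0 e1 M0
    by (intro mult_left_mono) (auto simp: mult_le_cancel_right1)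
  ultimately show ?thesis using 1 by (simp add: algebra_simps)
qed

lemma lam_max_cont:
  "continuous_on ((PD :: (complex^'n^'n) set) \<times> PD) (\<lambda>p. lam_max (snd p ** matrix_inv (fst p)))"
  unfolding continuous_on_iff
proof (intro ballI allI impI)
  fix p0 :: "(complex^'n^'n) \<times> (complex^'n^'n)" and \<epsilon> :: real
  assume p0: "p0 \<in> PD \<times> PD" and ep: "\<epsilon> > 0"
  obtain A0 B0 where p0e: "p0 = (A0, B0)" and A0: "A0 \<in> PD" and B0: "B0 \<in> PD" using p0 by auto
  define M0 where "M0 = lam_max (B0 ** matrix_inv A0)"
  have M0p: "M0 > 0" using lam_pos[OF A0 B0] by (simp add: M0_def)
  obtain xM0 where xM0: "xM0 \<noteq> 0" "qf B0 xM0 = M0 * qf A0 xM0" and upM0: "\<forall>x. qf B0 x \<le> M0 * qf A0 x"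
    using lam_max_prop[OF A0 B0] unfolding M0_def by blast
  define \<alpha> where "\<alpha> = lam_min (A0 ** matrix_inv (mat 1))"
  have \<alpha>p: "\<alpha> > 0" using lam_pos[OF mat1_PD A0] by (simp add: \<alpha>_def)
  have low: "\<alpha> * (norm x)^2 \<le> qf A0 x" for x
    using lam_min_prop[OF mat1_PD A0] unfolding \<alpha>_def qf_mat1 by blast
  define \<eta> where "\<eta> = min (1/2) (\<epsilon> / (4 * (1 + M0)))"
  have \<eta>p: "\<eta> > 0" using ep M0p by (simp add: \<eta>_def)
  have \<eta>1: "\<eta> \<le> 1/2" unfolding \<eta>_def by (rule min.cobounded1)
  have \<eta>e: "2 * \<eta> * (1 + M0) < \<epsilon>"
  proof -
    have "\<eta> \<le> \<epsilon> / (4 * (1 + M0))" by (simp add: \<eta>_def)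
    then have "\<eta> * (4 * (1 + M0)) \<le> \<epsilon>" using M0p by (simp add: pos_le_divide_eq)
    then show ?thesis using \<eta>p M0p ep by (simp add: algebra_simps)
  qed
  define C where "C = real (CARD('n))^2"
  have Cp: "C > 0" by (simp add: C_def)
  define \<delta> where "\<delta> = \<eta> * \<alpha> / C"
  have \<delta>p: "\<delta> > 0" using \<eta>p \<alpha>p Cp by (simp add: \<delta>_def)
  have pert: "\<bar>qf E x - qf E0 x\<bar> \<le> \<eta> * qf A0 x" if "norm (E - E0) < \<delta>" for E E0 :: "complex^'n^'n" and x
  proof -
    have "\<bar>qf E x - qf E0 x\<bar> = \<bar>qf (E - E0) x\<bar>" by (simp add: qf_diff)
    also have "\<dots> \<le> (\<Sum>i\<in>UNIV. \<Sum>j\<in>UNIV. cmod ((E - E0)$i$j)) * (norm x)^2" by (rule qf_bound)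
    also have "\<dots> \<le> (C * norm (E - E0)) * (norm x)^2"
      using K_bound[of "E - E0"] by (intro mult_right_mono) (auto simp: C_def)
    also have "\<dots> \<le> (C * \<delta>) * (norm x)^2"
      using that Cp by (intro mult_right_mono mult_left_mono) auto
    also have "C * \<delta> = \<eta> * \<alpha>" using Cp by (simp add: \<delta>_def)
    also have "\<eta> * \<alpha> * (norm x)^2 \<le> \<eta> * qf A0 x" using low[of x] \<eta>p by (simp add: mult.assoc mult_left_mono)
    finally show ?thesis .
  qed
  show "\<exists>\<delta>>0. \<forall>p\<in>PD \<times> PD. dist p p0 < \<delta> \<longrightarrow>
          dist (lam_max (snd p ** matrix_inv (fst p))) (lam_max (snd p0 ** matrix_inv (fst p0))) < \<epsilon>"
  proof (intro exI conjI ballI impI)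
    show "\<delta> > 0" by (rule \<delta>p)
    fix p :: "(complex^'n^'n) \<times> (complex^'n^'n)" assume p: "p \<in> PD \<times> PD" and d: "dist p p0 < \<delta>"
    obtain A B where pe: "p = (A, B)" and A: "A \<in> PD" and B: "B \<in> PD" using p by auto
    have dA: "norm (A - A0) < \<delta>" using dist_fst_le[of p p0] d by (simp add: pe p0e dist_norm)
    have dB: "norm (B - B0) < \<delta>" using dist_snd_le[of p p0] d by (simp add: pe p0e dist_norm)
    define M where "M = lam_max (B ** matrix_inv A)"
    have Mp: "M > 0" using lam_pos[OF A B] by (simp add: M_def)
    obtain x1 where x1: "x1 \<noteq> 0" "qf B x1 = M * qf A x1" and upM: "\<forall>x. qf B x \<le> M * qf A x"
      using lam_max_prop[OF A B] unfolding M_def by blast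
    have up: "M \<le> M0 + 2 * \<eta> * (1 + M0)"
    proof (rule sand_up[OF _ \<eta>1 Mp PD_pos[OF A x1(1)] pert[OF dA] x1(2) _ _ M0p])
      show "0 \<le> \<eta>" using \<eta>p by simp
      show "qf B x1 \<le> qf B0 x1 + \<eta> * qf A0 x1" using pert[OF dB, of x1] by linarith
      show "qf B0 x1 \<le> M0 * qf A0 x1" using upM0 by blast
    qed
    have lo: "M0 \<le> M + 2 * \<eta> * (1 + M0)"
    proof (rule sand_low[OF _ \<eta>1 Mp PD_pos[OF A0 xM0(1)] pert[OF dA] xM0(2) pert[OF dB] _ up M0p])
      show "0 \<le> \<eta>" using \<eta>p by simp
      show "qf B xM0 \<le> M * qf A xM0" using upM by blast
    qed
    have "\<bar>M - M0\<bar> < \<epsilon>" using up lo \<eta>e by linarith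
    then show "dist (lam_max (snd p ** matrix_inv (fst p))) (lam_max (snd p0 ** matrix_inv (fst p0))) < \<epsilon>"
      by (simp add: pe p0e M_def M0_def dist_real_def)
  qed
qed

lemma lam_min_cont:
  "continuous_on ((PD :: (complex^'n^'n) set) \<times> PD) (\<lambda>p. lam_min (snd p ** matrix_inv (fst p)))"
proof -
  have sw: "continuous_on ((PD :: (complex^'n^'n) set) \<times> PD) (\<lambda>p. lam_max (fst p ** matrix_inv (snd p)))"
  proof -
    have c1: "continuous_on ((PD :: (complex^'n^'n) set) \<times> PD) (\<lambda>p. (snd p, fst p))"
      by (intro continuous_intros)
    have c2: "(\<lambda>p. (snd p, fst p)) ` ((PD :: (complex^'n^'n) set) \<times> PD) \<subseteq> PD \<times> PD" by auto
    show ?thesis using continuous_on_compose2[OF lam_max_cont c1 c2] by simp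
  qed
  have ne: "\<forall>p\<in>(PD :: (complex^'n^'n) set) \<times> PD. lam_max (fst p ** matrix_inv (snd p)) \<noteq> 0"
    using lam_pos by (auto simp: less_le)
  have c: "continuous_on ((PD :: (complex^'n^'n) set) \<times> PD) (\<lambda>p. 1 / lam_max (fst p ** matrix_inv (snd p)))"
    by (rule continuous_on_divide[OF continuous_on_const sw ne])
  show ?thesis
  proof (rule continuous_on_cong[THEN iffD1, OF refl _ c])
    fix p :: "(complex^'n^'n) \<times> (complex^'n^'n)" assume "p \<in> PD \<times> PD"
    then obtain A B where pe: "p = (A, B)" and A: "A \<in> PD" and B: "B \<in> PD" by auto
    have "lam_max (A ** matrix_inv B) = 1 / lam_min (B ** matrix_inv A)" by (rule lam_mu(6)[OF A B])
    then show "1 / lam_max (fst p ** matrix_inv (snd p)) = lam_min (snd p ** matrix_inv (fst p))"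
      using lam_pos[OF A B] by (simp add: pe)
  qed
qed

lemma mu_cont: "continuous_on ((PD :: (complex^'n^'n) set) \<times> PD) (\<lambda>(A, B). mu A B)"
proof -
  let ?m = "\<lambda>p::(complex^'n^'n) \<times> (complex^'n^'n). lam_min (snd p ** matrix_inv (fst p))"
  let ?M = "\<lambda>p::(complex^'n^'n) \<times> (complex^'n^'n). lam_max (snd p ** matrix_inv (fst p))"
  have eq: "(\<lambda>(A, B). mu A B) = (\<lambda>p. (1 / (sqrt (?m p) + sqrt (?M p))) *\<^sub>R (snd p + sqrt (?m p * ?M p) *\<^sub>R fst p))"
    by (auto simp: mu_def Let_def fun_eq_iff)
  have ne: "\<forall>p\<in>(PD :: (complex^'n^'n) set) \<times> PD. sqrt (?m p) + sqrt (?M p) \<noteq> 0"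
  proof
    fix p :: "(complex^'n^'n) \<times> (complex^'n^'n)" assume "p \<in> PD \<times> PD"
    then obtain A B where pe: "p = (A, B)" and A: "A \<in> PD" and B: "B \<in> PD" by auto
    have "sqrt (?m p) > 0" "sqrt (?M p) > 0" using lam_pos[OF A B] by (simp_all add: pe)
    then show "sqrt (?m p) + sqrt (?M p) \<noteq> 0" by linarith
  qed
  have cm: "continuous_on (PD \<times> PD) ?m" by (rule lam_min_cont)
  have cM: "continuous_on (PD \<times> PD) ?M" by (rule lam_max_cont)
  show ?thesis unfolding eq
    by (intro continuous_on_scaleR continuous_on_divide[OF continuous_on_const _ ne] continuous_on_add
        continuous_on_real_sqrt continuous_on_mult cm cM continuous_on_fst continuous_on_snd continuous_on_id)
qed


theorem theorem1:
  shows "(\<forall>A B :: complex^'n^'n. A \<in> PD \<and> B \<in> PD \<longrightarrow> mu A B \<in> PD)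
    \<and> (\<forall>A B :: complex^'n^'n. A \<in> PD \<and> B \<in> PD \<longrightarrow>
         thompson A (mu A B) = thompson A B / 2 \<and> thompson (mu A B) B = thompson A B / 2)
    \<and> continuous_on ((PD :: (complex^'n^'n) set) \<times> PD) (\<lambda>(A, B). mu A B)
    \<and> (\<forall>A B :: complex^'n^'n. A \<in> PD \<and> B \<in> PD \<longrightarrow> mu A B = mu B A)
    \<and> (\<forall>(A :: complex^'n^'n) B (X :: complex^'n^'n). A \<in> PD \<and> B \<in> PD \<and> invertible X \<longrightarrow>
         mu (X ** A ** cadj X) (X ** B ** cadj X) = X ** mu A B ** cadj X)
    \<and> (\<forall>(A :: complex^'n^'n) B (a::real) (b::real). A \<in> PD \<and> B \<in> PD \<and> a > 0 \<and> b > 0 \<longrightarrow>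
         mu (a *\<^sub>R A) (b *\<^sub>R B) = sqrt (a * b) *\<^sub>R mu A B)
    \<and> (\<forall>A B :: complex^'n^'n. A \<in> PD \<and> B \<in> PD \<and> loewner_le A B \<longrightarrow>
         loewner_le A (mu A B) \<and> loewner_le (mu A B) B)
    \<and> (\<forall>S1 S2 :: complex^'n^'n. S1 \<in> PD \<and> S2 \<in> PD \<and> loewner_le S1 S2 \<longrightarrow>
         lam_max (mu (mat 1) S1) \<le> lam_max (mu (mat 1) S2)
         \<and> lam_min (mu (mat 1) S1) \<le> lam_min (mu (mat 1) S2))"
  proof (intro conjI)
  show "\<forall>A B :: complex^'n^'n. A \<in> PD \<and> B \<in> PD \<longrightarrow> mu A B \<in> PD"
    using mu_PD by blast
  show "\<forall>A B :: complex^'n^'n. A \<in> PD \<and> B \<in> PD \<longrightarrow>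
         thompson A (mu A B) = thompson A B / 2 \<and> thompson (mu A B) B = thompson A B / 2"
    using thompson_mid by blast
  show "continuous_on ((PD :: (complex^'n^'n) set) \<times> PD) (\<lambda>(A, B). mu A B)"
    by (rule mu_cont)
  show "\<forall>A B :: complex^'n^'n. A \<in> PD \<and> B \<in> PD \<longrightarrow> mu A B = mu B A"
    using mu_sym by blast
  show "\<forall>(A :: complex^'n^'n) B (X :: complex^'n^'n). A \<in> PD \<and> B \<in> PD \<and> invertible X \<longrightarrow>
         mu (X ** A ** cadj X) (X ** B ** cadj X) = X ** mu A B ** cadj X"
    using mu_cong by blast
  show "\<forall>(A :: complex^'n^'n) B (a::real) (b::real). A \<in> PD \<and> B \<in> PD \<and> a > 0 \<and> b > 0 \<longrightarrow>
         mu (a *\<^sub>R A) (b *\<^sub>R B) = sqrt (a * b) *\<^sub>R mu A B"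
    using mu_scale by blast
  show "\<forall>A B :: complex^'n^'n. A \<in> PD \<and> B \<in> PD \<and> loewner_le A B \<longrightarrow>
         loewner_le A (mu A B) \<and> loewner_le (mu A B) B"
    using mu_loewner by blast
  show "\<forall>S1 S2 :: complex^'n^'n. S1 \<in> PD \<and> S2 \<in> PD \<and> loewner_le S1 S2 \<longrightarrow>
         lam_max (mu (mat 1) S1) \<le> lam_max (mu (mat 1) S2)
         \<and> lam_min (mu (mat 1) S1) \<le> lam_min (mu (mat 1) S2)"
    using part7 by blast
qed

end
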